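(* Let $\mathbf{u}$ be an $m$-dimensional unit vector with entries in $\mathcal{R}_{12}$. Then for any $0\le j\le m-1$ there exists a sequence $G_1,\ldots,G_q$ of one-level operators of type $\zeta_{12}$ and two-level operators of type $X$ and $H'$ such that $G_1\cdots G_q\mathbf{u}=\mathbf{e}_j$.
   Context: $\zeta_{12}=e^{2\pi i/12}$ and $\mathcal{R}_{12}$ is the smallest subring of $\mathbb{C}$ containing $1/2$ and $\zeta_{12}$. $\mathbf{e}_j$ is the $j$-th standard basis vector. $X=\begin{bmatrix}0&1\\1&0\end{bmatrix}$, $H'=\frac{1+i}{2}\begin{bmatrix}1&1\\1&-1\end{bmatrix}$. The one-level operator $c_{[j]}$ of type $c$ is the $m\times m$ identity with $(j,j)$ entry replaced by $c$; the two-level operator $M_{[j,j']}$ ($j<j'$) of type $M\in\mathrm{M}_2(\mathbb{C})$ is the $m\times m$ identity with entries at $(j,j),(j,j'),(j',j),(j',j')$ replaced by $M_{1,1},M_{1,2},M_{2,1},M_{2,2}$. *)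

theory Defs
  imports Complex_Main "Jordan_Normal_Form.Matrix"
begin

definition zeta12 :: complex where
  "zeta12 = exp (2 * pi * \<i> / 12)"

inductive_set R12 :: "complex set" where
  one: "1 \<in> R12"
| half: "1/2 \<in> R12"
| zeta: "zeta12 \<in> R12"
| add: "a \<in> R12 \<Longrightarrow> b \<in> R12 \<Longrightarrow> a + b \<in> R12"
| neg: "a \<in> R12 \<Longrightarrow> - a \<in> R12"
| mult: "a \<in> R12 \<Longrightarrow> b \<in> R12 \<Longrightarrow> a * b \<in> R12"

definition Xmat :: "complex mat" where
  "Xmat = mat_of_rows_list 2 [[0, 1], [1, 0]]"

definition Hprime :: "complex mat" where
  "Hprime = mat_of_rows_list 2 [[(1 + \<i>) / 2, (1 + \<i>) / 2], [(1 + \<i>) / 2, - (1 + \<i>) / 2]]"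

definition one_level :: "nat \<Rightarrow> nat \<Rightarrow> complex \<Rightarrow> complex mat" where
  "one_level m j c = mat m m (\<lambda>(a, b). if a = b then (if a = j then c else 1) else 0)"

definition two_level :: "nat \<Rightarrow> nat \<Rightarrow> nat \<Rightarrow> complex mat \<Rightarrow> complex mat" where
  "two_level m j j' M = mat m m (\<lambda>(a, b).
     if a = j \<and> b = j then M $$ (0, 0)
     else if a = j \<and> b = j' then M $$ (0, 1)
     else if a = j' \<and> b = j then M $$ (1, 0)
     else if a = j' \<and> b = j' then M $$ (1, 1)
     else if a = b then 1 else 0)"

definition gates :: "nat \<Rightarrow> complex mat set" where
  "gates m = {one_level m j zeta12 | j. j < m}
           \<union> {two_level m j j' Xmat | j j'. j < j' \<and> j' < m}
           \<union> {two_level m j j' Hprime | j j'. j < j' \<and> j' < m}"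

definition mat_prod_list :: "nat \<Rightarrow> complex mat list \<Rightarrow> complex mat" where
  "mat_prod_list m Gs = foldr (\<lambda>A B. A * B) Gs (1\<^sub>m m)"

end

theory Submission
  imports Defs "HOL-Computational_Algebra.Primes"
begin

lemma sqrt3_irr: "sqrt 3 \<notin> \<rat>"
proof
  have pr: "prime (3::nat)" proof -
    have "{2..<3::nat} = {2}" by auto
    then show ?thesis unfolding prime_nat_iff' by simp
  qed
  assume "sqrt 3 \<in> \<rat>"
  then obtain m n :: nat
    where n: "n \<noteq> 0"
      and sqrt_rat: "\<bar>sqrt 3\<bar> = m / n"
      and "coprime m n" by (rule Rats_abs_nat_div_natE)
  have eq: "m\<^sup>2 = 3 * n\<^sup>2"
  proof -
    from n and sqrt_rat have "m = \<bar>sqrt 3\<bar> * n" by simp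
    then have "real (m\<^sup>2) = (sqrt 3)\<^sup>2 * n\<^sup>2" by (simp add: power_mult_distrib)
    also have "(sqrt 3)\<^sup>2 = 3" by simp
    finally show ?thesis by (simp only: of_nat_eq_iff[symmetric])
  qed
  have "3 dvd m \<and> 3 dvd n"
  proof
    from eq have "3 dvd m\<^sup>2" by simp
    with pr show "3 dvd m" by (rule prime_dvd_power)
    then obtain k where "m = 3 * k" ..
    with eq have "3 * n\<^sup>2 = 3\<^sup>2 * k\<^sup>2" by (simp add: power_mult_distrib)
    then have "n\<^sup>2 = 3 * k\<^sup>2" by (simp add: power2_eq_square)
    then have "3 dvd n\<^sup>2" ..
    with pr show "3 dvd n" by (rule prime_dvd_power)
  qed
  then have "3 dvd gcd m n" by simp
  with \<open>coprime m n\<close> show False by simp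
qed

lemma sqrt3_lin: fixes p q n :: int assumes "p + q * sqrt 3 = n" shows "q = 0"
proof (rule ccontr)
  assume "q \<noteq> 0"
  then have "sqrt 3 = (n - p) / q" using assms by (simp add: field_simps)
  then have "sqrt 3 \<in> \<rat>" by simp
  with sqrt3_irr show False by simp
qed

definition s3 :: real where "s3 = sqrt 3"

lemma zeta_eq: "zeta12 = Complex (sqrt 3 / 2) (1/2)"
proof -
  have "2 * pi * \<i> / 12 = \<i> * complex_of_real (pi/6)" by (simp add: field_simps)
  then have "zeta12 = cis (pi/6)" unfolding zeta12_def by (simp add: cis_conv_exp)
  then show ?thesis by (simp add: cis.ctr cos_30 sin_30)
qed

lemma s3sq: "sqrt 3 * sqrt 3 = (3::real)" by simp

lemma zeta2: "zeta12^2 = Complex (1/2) (sqrt 3 / 2)"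
  by (simp add: zeta_eq power2_eq_square complex_eq_iff) 
lemma zeta3: "zeta12^3 = \<i>"
  by (simp add: zeta_eq power3_eq_cube complex_eq_iff field_simps) 

lemma zeta4: "zeta12^4 = zeta12^2 - 1"
proof -
  have "zeta12^4 = zeta12 * zeta12^3" by (simp add: power_numeral_reduce)
  then show ?thesis unfolding zeta3 zeta2 by (simp add: zeta_eq complex_eq_iff)
qed

lemma zeta6: "zeta12^6 = -1"
proof -
  have "zeta12^6 = zeta12^3 * zeta12^3" by (simp flip: power_add)
  then show ?thesis by (simp add: zeta3)
qed

lemma zeta12p: "zeta12^12 = 1"
proof -
  have "zeta12^12 = zeta12^6 * zeta12^6" by (simp flip: power_add)
  then show ?thesis by (simp add: zeta6)
qed

lemma cmod_zeta: "cmod zeta12 = 1"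
  by (simp add: zeta_eq cmod_def power_divide)

definition q :: "int \<Rightarrow> int \<Rightarrow> int \<Rightarrow> int \<Rightarrow> complex" where
  "q a b c d = of_int a + of_int b * zeta12 + of_int c * zeta12^2 + of_int d * zeta12^3"

definition Zz :: "complex set" where "Zz = {z. \<exists>a b c d. z = q a b c d}"

lemma qZz[simp]: "q a b c d \<in> Zz" unfolding Zz_def by blast

lemma q_add: "q a b c d + q a' b' c' d' = q (a+a') (b+b') (c+c') (d+d')"
  unfolding q_def by (simp add: algebra_simps)
lemma q_diff: "q a b c d - q a' b' c' d' = q (a-a') (b-b') (c-c') (d-d')"
  unfolding q_def by (simp add: algebra_simps)
lemma q_neg: "- q a b c d = q (-a) (-b) (-c) (-d)"
  unfolding q_def by (simp add: algebra_simps)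
lemma q_smult: "of_int k * q a b c d = q (k*a) (k*b) (k*c) (k*d)"
  unfolding q_def by (simp add: algebra_simps)
lemma q_zeta: "zeta12 * q a b c d = q (-d) a (b+d) c"
proof -
  have "zeta12 * q a b c d = of_int a * zeta12 + of_int b * zeta12^2 + of_int c * zeta12^3 + of_int d * zeta12^4"
    unfolding q_def by (simp add: algebra_simps power_numeral_reduce)
  then show ?thesis unfolding q_def zeta4 by (simp add: algebra_simps)
qed

lemma Zz_add: "x \<in> Zz \<Longrightarrow> y \<in> Zz \<Longrightarrow> x + y \<in> Zz"
  unfolding Zz_def using q_add by fastforce
lemma Zz_neg: "x \<in> Zz \<Longrightarrow> - x \<in> Zz"
  unfolding Zz_def using q_neg by fastforce
lemma Zz_diff: "x \<in> Zz \<Longrightarrow> y \<in> Zz \<Longrightarrow> x - y \<in> Zz"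
  using Zz_add Zz_neg by (metis diff_conv_add_uminus)
lemma Zz_smult: "x \<in> Zz \<Longrightarrow> of_int k * x \<in> Zz"
  unfolding Zz_def using q_smult by fastforce
lemma Zz_zeta: "x \<in> Zz \<Longrightarrow> zeta12 * x \<in> Zz"
  unfolding Zz_def using q_zeta by fastforce
lemma Zz_mult: assumes "x \<in> Zz" "y \<in> Zz" shows "x * y \<in> Zz"
proof -
  obtain a b c d where x: "x = q a b c d" using assms(1) unfolding Zz_def by blast
  have "x * y = of_int a * y + of_int b * (zeta12 * y) + of_int c * (zeta12 * (zeta12 * y))
     + of_int d * (zeta12 * (zeta12 * (zeta12 * y)))"
    unfolding x q_def by (simp add: algebra_simps power2_eq_square power3_eq_cube)
  also have "\<dots> \<in> Zz" using assms(2)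
    by (intro Zz_add Zz_smult Zz_zeta)
  finally show ?thesis .
qed

lemma Zz_1[simp]: "1 \<in> Zz" using qZz[of 1 0 0 0] unfolding q_def by simp
lemma Zz_0[simp]: "0 \<in> Zz" using qZz[of 0 0 0 0] unfolding q_def by simp
lemma Zz_z[simp]: "zeta12 \<in> Zz" using qZz[of 0 1 0 0] unfolding q_def by simp
lemma Zz_i[simp]: "\<i> \<in> Zz" using qZz[of 0 0 0 1] unfolding q_def by (simp add: zeta3)
lemma Zz_2[simp]: "2 \<in> Zz" using qZz[of 2 0 0 0] unfolding q_def by simp
lemma Zz_pow: "x \<in> Zz \<Longrightarrow> x ^ n \<in> Zz"
  by (induction n) (auto intro: Zz_mult)

lemma Re_q: "Re (q a b c d) = a + b * sqrt 3 / 2 + c / 2"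
  unfolding q_def zeta2 zeta3 by (simp add: zeta_eq)
lemma Im_q: "Im (q a b c d) = b / 2 + c * sqrt 3 / 2 + d"
  unfolding q_def zeta2 zeta3 by (simp add: zeta_eq)

lemma norm_q: "(cmod (q a b c d))^2 = (a^2+b^2+c^2+d^2+a*c+b*d) + (a*b+b*c+c*d) * sqrt 3"
proof -
  have s: "sqrt 3 * sqrt 3 = (3::real)" by simp
  have "(cmod (q a b c d))^2 = (Re (q a b c d))^2 + (Im (q a b c d))^2" by (simp add: cmod_power2)
  also have "\<dots> = (a + b * sqrt 3 / 2 + c / 2)^2 + (b / 2 + c * sqrt 3 / 2 + d)^2" by (simp add: Re_q Im_q)
  also have "\<dots> = (a^2+b^2+c^2+d^2+a*c+b*d) + (a*b+b*c+c*d) * sqrt 3 + (sqrt 3 * sqrt 3 - 3) * (b^2+c^2)/4"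
    by (simp add: power2_eq_square field_simps)
  finally show ?thesis using s by simp
qed

lemma norm_q_conj: "(cmod (q a (-b) c (-d)))^2 = (a^2+b^2+c^2+d^2+a*c+b*d) - (a*b+b*c+c*d) * sqrt 3"
  using norm_q[of a "-b" c "-d"] by (simp add: algebra_simps)

lemma q_mod2: assumes "even (a-e0)" "even (b-e1)" "even (c-e2)" "even (d-e3)"
  shows "\<exists>w\<in>Zz. q a b c d = q e0 e1 e2 e3 + 2*w"
proof -
  obtain a' b' c' d' where "a - e0 = 2*a'" "b - e1 = 2*b'" "c - e2 = 2*c'" "d - e3 = 2*d'"
    using assms by (metis evenE)
  then have "q a b c d = q e0 e1 e2 e3 + 2 * q a' b' c' d'"
    unfolding q_def by (simp add: algebra_simps)
  then show ?thesis using qZz by blast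
qed

lemma zq: "zeta12^0 = q 1 0 0 0" "zeta12^1 = q 0 1 0 0" "zeta12^2 = q 0 0 1 0" "zeta12^3 = q 0 0 0 1"
  "zeta12^4 = q (-1) 0 1 0" "zeta12^5 = q 0 (-1) 0 1"
proof -
  show "zeta12^0 = q 1 0 0 0" "zeta12^1 = q 0 1 0 0" "zeta12^2 = q 0 0 1 0" "zeta12^3 = q 0 0 0 1"
    "zeta12^4 = q (-1) 0 1 0" unfolding q_def zeta4 by simp_all
  have "zeta12^5 = zeta12 * zeta12^4" by (simp add: power_numeral_reduce)
  also have "\<dots> = zeta12 * q (-1) 0 1 0" unfolding q_def zeta4 by simp
  also have "\<dots> = q 0 (-1) 0 1" unfolding q_zeta by simp
  finally show "zeta12^5 = q 0 (-1) 0 1" .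
qed

lemma zqB: "(1+zeta12)*zeta12^0 = q 1 1 0 0" "(1+zeta12)*zeta12^1 = q 0 1 1 0" "(1+zeta12)*zeta12^2 = q 0 0 1 1"
  "(1+zeta12)*zeta12^3 = q (-1) 0 1 1" "(1+zeta12)*zeta12^4 = q (-1) (-1) 1 1" "(1+zeta12)*zeta12^5 = q (-1) (-1) 0 1"
proof -
  have e: "(1+zeta12)*zeta12^k = zeta12^k + zeta12 * zeta12^k" for k by (simp add: algebra_simps)
  show "(1+zeta12)*zeta12^0 = q 1 1 0 0" "(1+zeta12)*zeta12^1 = q 0 1 1 0" "(1+zeta12)*zeta12^2 = q 0 0 1 1"
  "(1+zeta12)*zeta12^3 = q (-1) 0 1 1" "(1+zeta12)*zeta12^4 = q (-1) (-1) 1 1" "(1+zeta12)*zeta12^5 = q (-1) (-1) 0 1"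
    unfolding distrib_right mult_1_left zq q_zeta q_add by simp_all
qed

lemma exA: "zeta12^k = q e0 e1 e2 e3 \<Longrightarrow> k < 12 \<Longrightarrow> even(a-e0) \<Longrightarrow> even(b-e1) \<Longrightarrow> even(c-e2) \<Longrightarrow> even(d-e3)
  \<Longrightarrow> \<exists>k<12. \<exists>w\<in>Zz. q a b c d = zeta12^k + 2*w"
  using q_mod2[of a e0 b e1 c e2 d e3] by metis

lemma exB: "(1+zeta12)*zeta12^k = q e0 e1 e2 e3 \<Longrightarrow> k < 12 \<Longrightarrow> even(a-e0) \<Longrightarrow> even(b-e1) \<Longrightarrow> even(c-e2) \<Longrightarrow> even(d-e3)
  \<Longrightarrow> \<exists>k<12. \<exists>w\<in>Zz. q a b c d = (1+zeta12)*zeta12^k + 2*w"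
  using q_mod2[of a e0 b e1 c e2 d e3] by metis

lemma caseA: fixes a b c d :: int
  assumes "odd (a^2+b^2+c^2+d^2+a*c+b*d)"
  shows "\<exists>k<12. \<exists>w\<in>Zz. q a b c d = zeta12^k + 2*w"
proof -
  consider "odd a" "even b" "even c" "even d" | "even a" "odd b" "even c" "even d"
    | "even a" "even b" "odd c" "even d" | "even a" "even b" "even c" "odd d"
    | "odd a" "even b" "odd c" "even d" | "even a" "odd b" "even c" "odd d"
    using assms by (cases "even a"; cases "even b"; cases "even c"; cases "even d") auto
  then show ?thesis
  proof cases
    case 1 then show ?thesis by (intro exA[OF zq(1)]) auto
  next
    case 2 then show ?thesis by (intro exA[OF zq(2)]) auto
  next
    case 3 then show ?thesis by (intro exA[OF zq(3)]) auto
  next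
    case 4 then show ?thesis by (intro exA[OF zq(4)]) auto
  next
    case 5 then show ?thesis by (intro exA[OF zq(5)]) auto
  next
    case 6 then show ?thesis by (intro exA[OF zq(6)]) auto
  qed
qed

lemma caseB: fixes a b c d :: int
  assumes "odd (a*b+b*c+c*d)"
  shows "\<exists>k<12. \<exists>w\<in>Zz. q a b c d = (1+zeta12)*zeta12^k + 2*w"
proof -
  consider "odd a" "odd b" "even c" "even d" | "even a" "odd b" "odd c" "even d"
    | "even a" "even b" "odd c" "odd d" | "odd a" "even b" "odd c" "odd d"
    | "odd a" "odd b" "odd c" "odd d" | "odd a" "odd b" "even c" "odd d"
    using assms by (cases "even a"; cases "even b"; cases "even c"; cases "even d") auto
  then show ?thesis
  proof cases
    case 1 then show ?thesis by (intro exB[OF zqB(1)]) auto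
  next
    case 2 then show ?thesis by (intro exB[OF zqB(2)]) auto
  next
    case 3 then show ?thesis by (intro exB[OF zqB(3)]) auto
  next
    case 4 then show ?thesis by (intro exB[OF zqB(4)]) auto
  next
    case 5 then show ?thesis by (intro exB[OF zqB(5)]) auto
  next
    case 6 then show ?thesis by (intro exB[OF zqB(6)]) auto
  qed
qed

definition pp :: complex where "pp = 1 + \<i>"

lemma pp_q: "pp = q 1 0 0 1" unfolding pp_def q_def zeta3 by simp
lemma Zz_pp[simp]: "pp \<in> Zz" unfolding pp_q by (rule qZz)
lemma pp_sq: "pp * pp = 2 * \<i>" unfolding pp_def by (simp add: algebra_simps)
lemma two_pp: "2 = pp * (- \<i> * pp)" unfolding pp_def by (simp add: complex_eq_iff)
lemma cmod_pp2: "(cmod pp)^2 = 2" unfolding pp_def by (simp add: cmod_power2)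
lemma pp_nz[simp]: "pp \<noteq> 0" unfolding pp_def by (simp add: complex_eq_iff)

lemma exP: "pp * t = q e0 e1 e2 e3 \<Longrightarrow> t \<in> Zz \<Longrightarrow> even(a-e0) \<Longrightarrow> even(b-e1) \<Longrightarrow> even(c-e2) \<Longrightarrow> even(d-e3)
  \<Longrightarrow> \<exists>w\<in>Zz. q a b c d = pp * w"
proof -
  assume h: "pp * t = q e0 e1 e2 e3" "t \<in> Zz" "even(a-e0)" "even(b-e1)" "even(c-e2)" "even(d-e3)"
  then obtain w where w: "w \<in> Zz" "q a b c d = pp * t + 2 * w" using q_mod2[of a e0 b e1 c e2 d e3] by metis
  have "q a b c d = pp * (t + (- \<i> * pp) * w)" unfolding w(2) two_pp by (simp add: algebra_simps)
  moreover have "t + (- \<i> * pp) * w \<in> Zz" using h w by (intro Zz_add Zz_mult Zz_neg) auto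
  ultimately show ?thesis by blast
qed

lemma caseP: fixes a b c d :: int
  assumes "even (a^2+b^2+c^2+d^2+a*c+b*d)" "even (a*b+b*c+c*d)"
  shows "\<exists>w\<in>Zz. q a b c d = pp * w"
proof -
  have p: "pp * 0 = q 0 0 0 0" "pp * 1 = q 1 0 0 1" "pp * zeta12 = q (-1) 1 1 0" "pp * (1 + zeta12) = q 0 1 1 1"
  proof -
    show "pp * 0 = q 0 0 0 0" "pp * 1 = q 1 0 0 1" unfolding pp_q q_def by simp_all
    have a: "pp * zeta12 = q (-1) 1 1 0" unfolding pp_q mult.commute[of _ zeta12] q_zeta by simp
    then show "pp * zeta12 = q (-1) 1 1 0" .
    have "pp * (1 + zeta12) = pp + pp * zeta12" by (simp add: algebra_simps)
    also have "\<dots> = q 1 0 0 1 + q (-1) 1 1 0" using a pp_q by simp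
    finally show "pp * (1 + zeta12) = q 0 1 1 1" unfolding q_add by simp
  qed
  consider "even a" "even b" "even c" "even d" | "odd a" "even b" "even c" "odd d"
    | "odd a" "odd b" "odd c" "even d" | "even a" "odd b" "odd c" "odd d"
    using assms by (cases "even a"; cases "even b"; cases "even c"; cases "even d") auto
  then show ?thesis
  proof cases
    case 1 then show ?thesis by (intro exP[OF p(1)]) auto
  next
    case 2 then show ?thesis by (intro exP[OF p(2)]) auto
  next
    case 3 then show ?thesis by (intro exP[OF p(3)]) auto
  next
    case 4 then show ?thesis by (intro exP[OF p(4)] Zz_add) auto
  qed
qed

lemma Zz_2pow: "(2::complex)^n \<in> Zz" by (rule Zz_pow) simp

lemma R12_den: "x \<in> R12 \<Longrightarrow> \<exists>k. (2::complex)^k * x \<in> Zz"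
proof (induction rule: R12.induct)
  case one then show ?case by (rule exI[of _ 0]) simp
next
  case half then show ?case by (rule exI[of _ 1]) simp
next
  case zeta then show ?case by (rule exI[of _ 0]) simp
next
  case (add a b)
  then obtain k1 k2 where k: "(2::complex)^k1 * a \<in> Zz" "(2::complex)^k2 * b \<in> Zz" by blast
  have "(2::complex)^(k1+k2) * (a+b) = 2^k2 * (2^k1 * a) + 2^k1 * (2^k2 * b)" by (simp add: algebra_simps power_add)
  also have "\<dots> \<in> Zz" using k by (blast intro: Zz_add Zz_mult Zz_2pow)
  finally show ?case by blast
next
  case (neg a)
  then obtain k1 where k: "(2::complex)^k1 * a \<in> Zz" by blast
  have "(2::complex)^k1 * (-a) = - (2^k1 * a)" by simp
  also have "\<dots> \<in> Zz" using k by (intro Zz_neg)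
  finally show ?case by blast
next
  case (mult a b)
  then obtain k1 k2 where k: "(2::complex)^k1 * a \<in> Zz" "(2::complex)^k2 * b \<in> Zz" by blast
  have "(2::complex)^(k1+k2) * (a*b) = (2^k1 * a) * (2^k2 * b)" by (simp add: algebra_simps power_add)
  also have "\<dots> \<in> Zz" using k by (rule Zz_mult)
  finally show ?case by blast
qed

lemma den_mono: assumes "(2::complex)^k * x \<in> Zz" "k \<le> K" shows "(2::complex)^K * x \<in> Zz"
proof -
  have "(2::complex)^K * x = 2^(K-k) * (2^k * x)" using assms(2) by (simp add: mult.assoc flip: power_add)
  also have "\<dots> \<in> Zz" using assms(1) by (blast intro: Zz_mult Zz_2pow)
  finally show ?thesis .
qed

lemma den_pp: assumes "(2::complex)^K * x \<in> Zz" shows "pp^(2*K) * x \<in> Zz"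
proof -
  have "pp^(2*K) * x = \<i>^K * (2^K * x)" by (simp add: power_mult pp_sq power2_eq_square power_mult_distrib)
  also have "\<dots> \<in> Zz" using assms by (blast intro: Zz_mult Zz_pow Zz_i)
  finally show ?thesis .
qed

definition reach :: "nat \<Rightarrow> complex vec \<Rightarrow> complex vec \<Rightarrow> bool" where
  "reach m u v = (\<exists>Gs. set Gs \<subseteq> gates m \<and> mat_prod_list m Gs *\<^sub>v u = v)"

lemma gates_carrier: "G \<in> gates m \<Longrightarrow> G \<in> carrier_mat m m"
  unfolding gates_def one_level_def two_level_def by auto

lemma prod_carrier: "set Gs \<subseteq> gates m \<Longrightarrow> mat_prod_list m Gs \<in> carrier_mat m m"
  unfolding mat_prod_list_def by (induction Gs) (auto dest: gates_carrier)

lemma foldr_prod: "set Gs \<subseteq> gates m \<Longrightarrow> B \<in> carrier_mat m m \<Longrightarrow>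
   foldr (\<lambda>A B. A * B) Gs B = mat_prod_list m Gs * B"
proof (induction Gs)
  case Nil then show ?case unfolding mat_prod_list_def by simp
next
  case (Cons G Gs)
  have G: "G \<in> carrier_mat m m" using Cons gates_carrier by auto
  have P: "mat_prod_list m Gs \<in> carrier_mat m m" using Cons prod_carrier by auto
  have "foldr (\<lambda>A B. A * B) (G # Gs) B = G * (mat_prod_list m Gs * B)" using Cons by simp
  also have "\<dots> = (G * mat_prod_list m Gs) * B" using G P Cons(3) by (simp add: assoc_mult_mat)
  also have "G * mat_prod_list m Gs = mat_prod_list m (G # Gs)" unfolding mat_prod_list_def by simp
  finally show ?case .
qed

lemma reach_refl: "u \<in> carrier_vec m \<Longrightarrow> reach m u u"
  unfolding reach_def by (rule exI[of _ "[]"]) (simp add: mat_prod_list_def)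

lemma reach_carrier: "reach m u v \<Longrightarrow> u \<in> carrier_vec m \<Longrightarrow> v \<in> carrier_vec m"
  unfolding reach_def using prod_carrier by (metis mult_mat_vec_carrier)

lemma reach_trans: assumes "reach m u v" "reach m v w" "u \<in> carrier_vec m" shows "reach m u w"
proof -
  obtain G1 where G1: "set G1 \<subseteq> gates m" "mat_prod_list m G1 *\<^sub>v u = v" using assms(1) unfolding reach_def by blast
  obtain G2 where G2: "set G2 \<subseteq> gates m" "mat_prod_list m G2 *\<^sub>v v = w" using assms(2) unfolding reach_def by blast
  have C1: "mat_prod_list m G1 \<in> carrier_mat m m" using G1 prod_carrier by blast
  have C2: "mat_prod_list m G2 \<in> carrier_mat m m" using G2 prod_carrier by blast
  have "mat_prod_list m (G2 @ G1) = foldr (\<lambda>A B. A * B) G2 (mat_prod_list m G1)"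
    unfolding mat_prod_list_def by simp
  also have "\<dots> = mat_prod_list m G2 * mat_prod_list m G1" using G2(1) C1 by (rule foldr_prod)
  finally have "mat_prod_list m (G2 @ G1) *\<^sub>v u = mat_prod_list m G2 *\<^sub>v (mat_prod_list m G1 *\<^sub>v u)"
    using C1 C2 assms(3) by (simp add: assoc_mult_mat_vec)
  then have "mat_prod_list m (G2 @ G1) *\<^sub>v u = w" using G1 G2 by simp
  moreover have "set (G2 @ G1) \<subseteq> gates m" using G1 G2 by auto
  ultimately show ?thesis unfolding reach_def by blast
qed

lemma reach_gate: assumes "G \<in> gates m" shows "reach m u (G *\<^sub>v u)"
proof -
  have "mat_prod_list m [G] = G" unfolding mat_prod_list_def using gates_carrier[OF assms] by simp
  then show ?thesis unfolding reach_def using assms by (intro exI[of _ "[G]"]) simp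
qed

lemma sum1: "(a::nat) < m \<Longrightarrow> (\<And>k. k < m \<Longrightarrow> k \<noteq> a \<Longrightarrow> f k = 0) \<Longrightarrow> sum f {0..<m} = (f a :: complex)"
proof -
  assume h: "a < m" "\<And>k. k < m \<Longrightarrow> k \<noteq> a \<Longrightarrow> f k = 0"
  have "sum f {0..<m} = sum f {a}" using h by (intro sum.mono_neutral_right) auto
  then show ?thesis by simp
qed

lemma sum2: "(a::nat) < m \<Longrightarrow> b < m \<Longrightarrow> a \<noteq> b \<Longrightarrow> (\<And>k. k < m \<Longrightarrow> k \<noteq> a \<Longrightarrow> k \<noteq> b \<Longrightarrow> f k = 0) \<Longrightarrow> sum f {0..<m} = (f a + f b :: complex)"
proof -
  assume h: "a < m" "b < m" "a \<noteq> b" "\<And>k. k < m \<Longrightarrow> k \<noteq> a \<Longrightarrow> k \<noteq> b \<Longrightarrow> f k = 0"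
  have "sum f {0..<m} = sum f {a,b}" using h by (intro sum.mono_neutral_right) auto
  then show ?thesis using h by simp
qed

lemma one_level_apply: assumes "u \<in> carrier_vec m"
  shows "one_level m j c *\<^sub>v u = vec m (\<lambda>i. if i = j then c * u$i else u$i)"
proof (rule eq_vecI)
  fix i assume i: "i < dim_vec (vec m (\<lambda>i. if i = j then c * u$i else u$i))"
  then have i: "i < m" by simp
  have "(one_level m j c *\<^sub>v u) $ i = (\<Sum>k\<in>{0..<m}. one_level m j c $$ (i,k) * u $ k)"
    using i assms unfolding one_level_def by (simp add: scalar_prod_def)
  also have "\<dots> = one_level m j c $$ (i,i) * u $ i" using i
    by (intro sum1) (auto simp: one_level_def)
  also have "\<dots> = (if i = j then c * u$i else u$i)" using i by (simp add: one_level_def)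
  finally show "(one_level m j c *\<^sub>v u) $ i = vec m (\<lambda>i. if i = j then c * u$i else u$i) $ i" using i by simp
qed (simp add: one_level_def)

lemma two_level_apply: assumes "u \<in> carrier_vec m" "a < b" "b < m"
  shows "two_level m a b M *\<^sub>v u = vec m (\<lambda>i. if i = a then M$$(0,0) * u$a + M$$(0,1) * u$b
     else if i = b then M$$(1,0) * u$a + M$$(1,1) * u$b else u$i)"
  (is "_ = vec m ?f")
proof (rule eq_vecI)
  fix i assume i: "i < dim_vec (vec m ?f)"
  then have i: "i < m" by simp
  have "(two_level m a b M *\<^sub>v u) $ i = (\<Sum>k\<in>{0..<m}. two_level m a b M $$ (i,k) * u $ k)"
    using i assms unfolding two_level_def by (simp add: scalar_prod_def)
  also have "\<dots> = ?f i"
  proof (cases "i = a \<or> i = b")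
    case True
    then show ?thesis using assms i by (subst sum2[of a _ b]) (auto simp: two_level_def)
  next
    case False
    then show ?thesis using assms i by (subst sum1[of i]) (auto simp: two_level_def)
  qed
  finally show "(two_level m a b M *\<^sub>v u) $ i = vec m ?f $ i" using i by simp
qed (simp add: two_level_def)

definition nrm :: "nat \<Rightarrow> complex vec \<Rightarrow> real" where
  "nrm m u = (\<Sum>i<m. (cmod (u$i))^2)"

definition dvdp :: "complex \<Rightarrow> bool" where "dvdp x = (\<exists>w\<in>Zz. x = pp * w)"

lemma dvdp_Zz: "dvdp x \<Longrightarrow> x \<in> Zz" unfolding dvdp_def using Zz_mult Zz_pp by blast

definition hh :: complex where "hh = (1 + \<i>)/2"
lemma hh2: "hh * 2 = pp" unfolding hh_def pp_def by simp

lemma Hprime_idx: "Hprime $$ (0,0) = hh" "Hprime $$ (0,1) = hh" "Hprime $$ (1,0) = hh" "Hprime $$ (1,1) = - hh"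
  unfolding Hprime_def hh_def mat_of_rows_list_def by (simp_all add: complex_eq_iff)

lemma Xmat_idx: "Xmat $$ (0,0) = 0" "Xmat $$ (0,1) = 1" "Xmat $$ (1,0) = 1" "Xmat $$ (1,1) = 0"
  unfolding Xmat_def mat_of_rows_list_def by simp_all

lemma hh_norm: "(cmod (hh * (p + r)))^2 + (cmod (hh * (p - r)))^2 = (cmod p)^2 + (cmod r)^2"
proof -
  obtain p1 p2 where p: "p = Complex p1 p2" by (cases p)
  obtain r1 r2 where r: "r = Complex r1 r2" by (cases r)
  have hc: "hh = Complex (1/2) (1/2)" unfolding hh_def by (simp add: complex_eq_iff)
  show ?thesis unfolding p r hc cmod_power2 by (simp add: power2_eq_square field_simps)
qed

lemma hh_dvd: assumes "y1 - y2 = 2 * w" "w \<in> Zz" "y2 \<in> Zz"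
  shows "dvdp (hh * (y1 + y2))" "dvdp (hh * (y1 - y2))" "dvdp (hh * (y2 - y1))"
proof -
  have y1: "y1 = 2*w + y2" using assms(1) by (simp add: algebra_simps)
  have "hh * (y1 + y2) = (hh * 2) * (w + y2)" unfolding y1 by (simp add: algebra_simps)
  then have "hh * (y1 + y2) = pp * (w + y2)" unfolding hh2 .
  then show "dvdp (hh * (y1 + y2))" unfolding dvdp_def using assms Zz_add by blast
  have "hh * (y1 - y2) = (hh * 2) * w" unfolding y1 by (simp add: algebra_simps)
  then have "hh * (y1 - y2) = pp * w" unfolding hh2 .
  then show "dvdp (hh * (y1 - y2))" unfolding dvdp_def using assms by blast
  have "hh * (y2 - y1) = (hh * 2) * (- w)" unfolding y1 by (simp add: algebra_simps)
  then have "hh * (y2 - y1) = pp * (- w)" unfolding hh2 .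
  then show "dvdp (hh * (y2 - y1))" unfolding dvdp_def using assms Zz_neg by blast
qed

lemma sum_change2: fixes f g :: "nat \<Rightarrow> real"
  assumes "a < m" "b < m" "a \<noteq> b" "\<And>t. t < m \<Longrightarrow> t \<noteq> a \<Longrightarrow> t \<noteq> b \<Longrightarrow> f t = g t"
    "f a + f b = g a + g b"
  shows "sum f {..<m} = sum g {..<m}"
proof -
  have r: "sum h {..<m} = h a + h b + sum h ({..<m} - {a,b})" for h :: "nat \<Rightarrow> real"
  proof -
    have "sum h {..<m} = sum h {a,b} + sum h ({..<m} - {a,b})" using assms
      by (subst sum.subset_diff[of "{a,b}"]) auto
    then show ?thesis using assms by simp
  qed
  have "sum f ({..<m} - {a,b}) = sum g ({..<m} - {a,b})" using assms by (intro sum.cong) auto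
  then show ?thesis unfolding r[of f] r[of g] using assms by simp
qed

definition mulj :: "nat \<Rightarrow> complex vec \<Rightarrow> nat \<Rightarrow> complex \<Rightarrow> complex vec" where
  "mulj m u j c = vec m (\<lambda>i. if i = j then c * u$i else u$i)"

lemma mulj_reach: assumes "u \<in> carrier_vec m" "j < m" shows "reach m u (mulj m u j (zeta12^e))"
proof (induction e)
  case 0
  have "mulj m u j (zeta12^0) = u" unfolding mulj_def using assms by (intro eq_vecI) auto
  then show ?case using reach_refl assms by simp
next
  case (Suc e)
  have g: "one_level m j zeta12 \<in> gates m" unfolding gates_def using assms by blast
  have c: "mulj m u j (zeta12^e) \<in> carrier_vec m" unfolding mulj_def by simp
  have "one_level m j zeta12 *\<^sub>v mulj m u j (zeta12^e) = mulj m u j (zeta12^Suc e)"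
    unfolding one_level_apply[OF c] unfolding mulj_def by (intro eq_vecI) auto
  then have "reach m (mulj m u j (zeta12^e)) (mulj m u j (zeta12^Suc e))" using reach_gate[OF g] by metis
  then show ?case using reach_trans Suc assms(1) by blast
qed

lemma mulj_nrm: "nrm m (mulj m u j (zeta12^e)) = nrm m u"
  unfolding nrm_def mulj_def by (intro sum.cong) (auto simp: norm_mult norm_power cmod_zeta)

lemma H_apply: assumes "v \<in> carrier_vec m" "a < b" "b < m"
  shows "(two_level m a b Hprime *\<^sub>v v) $ a = hh * (v$a + v$b)"
    "(two_level m a b Hprime *\<^sub>v v) $ b = hh * (v$a - v$b)"
    "t < m \<Longrightarrow> t \<noteq> a \<Longrightarrow> t \<noteq> b \<Longrightarrow> (two_level m a b Hprime *\<^sub>v v) $ t = v $ t"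
    "two_level m a b Hprime *\<^sub>v v \<in> carrier_vec m"
    "nrm m (two_level m a b Hprime *\<^sub>v v) = nrm m v"
proof -
  note e = two_level_apply[OF assms, of Hprime]
  show 1: "(two_level m a b Hprime *\<^sub>v v) $ a = hh * (v$a + v$b)" using assms unfolding e Hprime_idx
    by (simp add: algebra_simps)
  show 2: "(two_level m a b Hprime *\<^sub>v v) $ b = hh * (v$a - v$b)" using assms unfolding e Hprime_idx
    by (simp add: algebra_simps)
  have 3: "\<And>t. t < m \<Longrightarrow> t \<noteq> a \<Longrightarrow> t \<noteq> b \<Longrightarrow> (two_level m a b Hprime *\<^sub>v v) $ t = v $ t"
    unfolding e by simp
  then show "t < m \<Longrightarrow> t \<noteq> a \<Longrightarrow> t \<noteq> b \<Longrightarrow> (two_level m a b Hprime *\<^sub>v v) $ t = v $ t" .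
  show "two_level m a b Hprime *\<^sub>v v \<in> carrier_vec m" unfolding e by simp
  show "nrm m (two_level m a b Hprime *\<^sub>v v) = nrm m v" unfolding nrm_def
    using assms by (intro sum_change2[of a m b]) (simp_all add: 1 2 hh_norm 3)
qed

lemma pair_op:
  assumes u: "u \<in> carrier_vec m" and ij: "i < m" "j < m" "i \<noteq> j"
    and w: "w \<in> Zz" "pp^L * u$i - zeta12^e * (pp^L * u$j) = 2*w" and xj: "pp^L * u$j \<in> Zz"
  shows "\<exists>v. reach m u v \<and> v \<in> carrier_vec m \<and> nrm m v = nrm m u \<and> dvdp (pp^L * v$i)
     \<and> dvdp (pp^L * v$j) \<and> (\<forall>t<m. t \<noteq> i \<longrightarrow> t \<noteq> j \<longrightarrow> v$t = u$t)"
proof -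
  define u1 where "u1 = mulj m u j (zeta12^e)"
  have r1: "reach m u u1" unfolding u1_def using mulj_reach u ij by blast
  have c1: "u1 \<in> carrier_vec m" unfolding u1_def mulj_def by simp
  have n1: "nrm m u1 = nrm m u" unfolding u1_def by (rule mulj_nrm)
  have u1i: "u1$i = u$i" and u1j: "u1$j = zeta12^e * u$j" and u1t: "\<And>t. t < m \<Longrightarrow> t \<noteq> j \<Longrightarrow> u1$t = u$t"
    unfolding u1_def mulj_def using ij by auto
  define y1 where "y1 = pp^L * u1$i"
  define y2 where "y2 = pp^L * u1$j"
  have yd: "y1 - y2 = 2*w" unfolding y1_def y2_def u1i u1j using w(2) by (simp add: algebra_simps)
  have y2Z: "y2 \<in> Zz" unfolding y2_def u1j using xj Zz_mult[OF Zz_pow[OF Zz_z, of e] xj]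
    by (simp add: algebra_simps)
  define a where "a = min i j"
  define b where "b = max i j"
  have ab: "a < b" "b < m" unfolding a_def b_def using ij by auto
  define v where "v = two_level m a b Hprime *\<^sub>v u1"
  have g: "two_level m a b Hprime \<in> gates m" unfolding gates_def using ab by blast
  have r2: "reach m u1 v" unfolding v_def by (rule reach_gate[OF g])
  have r: "reach m u v" using reach_trans[OF r1 r2 u] .
  note H = H_apply[OF c1 ab]
  have cv: "v \<in> carrier_vec m" unfolding v_def using H by blast
  have nv: "nrm m v = nrm m u" unfolding v_def using H n1 by simp
  have ppd: "pp^L * (hh * (p + r)) = hh * (pp^L * p + pp^L * r)" "pp^L * (hh * (p - r)) = hh * (pp^L * p - pp^L * r)" for p r
    by (simp_all add: algebra_simps)
  note dd = hh_dvd[OF yd w(1) y2Z]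
  have dv: "dvdp (pp^L * v$i) \<and> dvdp (pp^L * v$j)"
  proof (cases "i < j")
    case True
    then have "a = i" "b = j" unfolding a_def b_def by auto
    then have vi: "v$i = hh*(u1$i + u1$j)" and vj: "v$j = hh*(u1$i - u1$j)"
      using H(1,2) unfolding v_def by simp_all
    have "pp^L * v$i = hh*(y1+y2)" "pp^L * v$j = hh*(y1-y2)"
      unfolding vi vj y1_def y2_def by (simp_all add: algebra_simps)
    then show ?thesis using dd by simp
  next
    case False
    then have "a = j" "b = i" unfolding a_def b_def using ij by auto
    then have vj: "v$j = hh*(u1$j + u1$i)" and vi: "v$i = hh*(u1$j - u1$i)"
      using H(1,2) unfolding v_def by simp_all
    have "pp^L * v$j = hh*(y1+y2)" "pp^L * v$i = hh*(y2-y1)"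
      unfolding vi vj y1_def y2_def by (simp_all add: algebra_simps)
    then show ?thesis using dd by simp
  qed
  have vt: "\<forall>t<m. t \<noteq> i \<longrightarrow> t \<noteq> j \<longrightarrow> v$t = u$t"
    unfolding v_def using H(3) u1t ab unfolding a_def b_def by (metis max_def min_def)
  show ?thesis using r cv nv dv vt by blast
qed

lemma combine: assumes "k1 < (12::nat)" "k2 < 12" "w1 \<in> Zz" "w2 \<in> Zz" "X = c * zeta12^k1 + 2*w1" "Y = c * zeta12^k2 + 2*w2"
  shows "\<exists>e w. w \<in> Zz \<and> X - zeta12^e * Y = 2*w"
proof -
  define e where "e = k1 + 12 - k2"
  have "zeta12^e * zeta12^k2 = zeta12^(k1+12)" unfolding e_def using assms(2) by (simp flip: power_add)
  also have "\<dots> = zeta12^k1" by (simp add: power_add zeta12p)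
  finally have z: "zeta12^e * zeta12^k2 = zeta12^k1" .
  have "X - zeta12^e * Y = c * (zeta12^e * zeta12^k2) + 2*w1 - zeta12^e * (c * zeta12^k2 + 2*w2)"
    unfolding assms(5,6) z by simp
  also have "\<dots> = 2 * (w1 - zeta12^e * w2)" by (simp add: algebra_simps)
  finally have "X - zeta12^e * Y = 2 * (w1 - zeta12^e * w2)" .
  moreover have "w1 - zeta12^e * w2 \<in> Zz" using assms by (intro Zz_diff Zz_mult Zz_pow) auto
  ultimately show ?thesis by blast
qed

lemma partner_parity: fixes F :: "nat \<Rightarrow> int"
  assumes "even (\<Sum>k<m. F k)" "i < m" "odd (F i)" shows "\<exists>j<m. j \<noteq> i \<and> odd (F j)"
proof (rule ccontr)
  assume "\<not> ?thesis"
  then have "{a\<in>{..<m}. odd (F a)} = {i}" using assms by auto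
  moreover have "even (card {a\<in>{..<m}. odd (F a)})" using assms(1) even_sum_iff[of "{..<m}" F] by simp
  ultimately show False by simp
qed

lemma find_partner:
  fixes x :: "nat \<Rightarrow> complex" and m l i :: nat
  assumes "\<forall>k<m. x k \<in> Zz" "(\<Sum>k<m. (cmod (x k))^2) = 2^(Suc l)" "i < m" "\<not> dvdp (x i)"
  shows "\<exists>j<m. j \<noteq> i \<and> (\<exists>e w. w \<in> Zz \<and> x i - zeta12^e * x j = 2*w)"
proof -
  have "\<forall>k. \<exists>t. k < m \<longrightarrow> x k = q (fst t) (fst (snd t)) (fst (snd (snd t))) (snd (snd (snd t)))"
    using assms(1) unfolding Zz_def by fastforce
  then obtain T where T: "\<And>k. k < m \<Longrightarrow> x k = q (fst (T k)) (fst (snd (T k))) (fst (snd (snd (T k)))) (snd (snd (snd (T k))))"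
    by metis
  define A where "A k = fst (T k)" for k
  define B where "B k = fst (snd (T k))" for k
  define C where "C k = fst (snd (snd (T k)))" for k
  define D where "D k = snd (snd (snd (T k)))" for k
  have xk: "\<And>k. k < m \<Longrightarrow> x k = q (A k) (B k) (C k) (D k)" using T unfolding A_def B_def C_def D_def by blast
  define P where "P k = (A k)^2 + (B k)^2 + (C k)^2 + (D k)^2 + A k * C k + B k * D k" for k
  define Q where "Q k = A k * B k + B k * C k + C k * D k" for k
  have nk: "(cmod (x k))^2 = real_of_int (P k) + real_of_int (Q k) * sqrt 3" if "k < m" for k
    unfolding xk[OF that] norm_q P_def Q_def by simp
  have "(\<Sum>k<m. (cmod (x k))^2) = (\<Sum>k<m. real_of_int (P k) + real_of_int (Q k) * sqrt 3)"
    using nk by (intro sum.cong) auto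
  also have "\<dots> = real_of_int (\<Sum>k<m. P k) + real_of_int (\<Sum>k<m. Q k) * sqrt 3"
    by (simp add: sum.distrib sum_distrib_right)
  finally have e: "real_of_int (\<Sum>k<m. P k) + real_of_int (\<Sum>k<m. Q k) * sqrt 3 = real_of_int (2^(Suc l))"
    using assms(2) by simp
  have Q0: "(\<Sum>k<m. Q k) = 0" using sqrt3_lin[OF e] .
  have "real_of_int (\<Sum>k<m. P k) = real_of_int (2^(Suc l))" using e unfolding Q0
    by (simp only: of_int_0 mult_zero_left add_0_right)
  then have P0: "(\<Sum>k<m. P k) = 2^(Suc l)" by (simp only: of_int_eq_iff)
  have evP: "even (\<Sum>k<m. P k)" unfolding P0 by simp
  have evQ: "even (\<Sum>k<m. Q k)" unfolding Q0 by simp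
  have "odd (P i) \<or> odd (Q i)"
  proof (rule ccontr)
    assume "\<not> (odd (P i) \<or> odd (Q i))"
    then have "\<exists>w\<in>Zz. q (A i) (B i) (C i) (D i) = pp * w" unfolding P_def Q_def by (intro caseP) auto
    then show False using assms(4) xk[OF assms(3)] unfolding dvdp_def by simp
  qed
  then show ?thesis
  proof
    assume oi: "odd (P i)"
    obtain j where j: "j < m" "j \<noteq> i" "odd (P j)" using partner_parity[of P m i] evP assms(3) oi by blast
    obtain k1 w1 where 1: "k1 < 12" "w1 \<in> Zz" "x i = 1 * zeta12^k1 + 2*w1"
      using caseA[of "A i" "B i" "C i" "D i"] oi xk[OF assms(3)] unfolding P_def by auto
    obtain k2 w2 where 2: "k2 < 12" "w2 \<in> Zz" "x j = 1 * zeta12^k2 + 2*w2"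
      using caseA[of "A j" "B j" "C j" "D j"] j xk[OF j(1)] unfolding P_def by auto
    show ?thesis using combine[OF 1(1) 2(1) 1(2) 2(2) 1(3) 2(3)] j by blast
  next
    assume oi: "odd (Q i)"
    obtain j where j: "j < m" "j \<noteq> i" "odd (Q j)" using partner_parity[of Q m i] evQ assms(3) oi by blast
    obtain k1 w1 where 1: "k1 < 12" "w1 \<in> Zz" "x i = (1+zeta12) * zeta12^k1 + 2*w1"
      using caseB[of "A i" "B i" "C i" "D i"] oi xk[OF assms(3)] unfolding Q_def by auto
    obtain k2 w2 where 2: "k2 < 12" "w2 \<in> Zz" "x j = (1+zeta12) * zeta12^k2 + 2*w2"
      using caseB[of "A j" "B j" "C j" "D j"] j xk[OF j(1)] unfolding Q_def by auto
    show ?thesis using combine[OF 1(1) 2(1) 1(2) 2(2) 1(3) 2(3)] j by blast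
  qed
qed

lemma cmod_ppL: "(cmod (pp^L * z))^2 = 2^L * (cmod z)^2"
proof -
  have "(cmod (pp^L * z))^2 = ((cmod pp)^2)^L * (cmod z)^2"
    by (simp add: norm_mult norm_power power_mult_distrib flip: power_mult) (simp add: mult.commute)
  then show ?thesis unfolding cmod_pp2 .
qed

lemma level_step:
  assumes "u \<in> carrier_vec m" "\<forall>i<m. pp^(Suc l) * u$i \<in> Zz" "nrm m u = 1"
  shows "\<exists>v. reach m u v \<and> v \<in> carrier_vec m \<and> (\<forall>i<m. pp^l * v$i \<in> Zz) \<and> nrm m v = 1"
proof -
  have "\<forall>u. u \<in> carrier_vec m \<longrightarrow> (\<forall>i<m. pp^(Suc l) * u$i \<in> Zz) \<longrightarrow> nrm m u = 1 \<longrightarrow>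
     card {i. i<m \<and> \<not> dvdp (pp^(Suc l) * u$i)} = n \<longrightarrow>
     (\<exists>v. reach m u v \<and> v \<in> carrier_vec m \<and> (\<forall>i<m. pp^l * v$i \<in> Zz) \<and> nrm m v = 1)" for n
  proof (induction n rule: less_induct)
    case (less n)
    show ?case
    proof (intro allI impI)
      fix u assume u: "u \<in> carrier_vec m" and uZ: "\<forall>i<m. pp^(Suc l) * u$i \<in> Zz" and un: "nrm m u = 1"
        and card: "card {i. i<m \<and> \<not> dvdp (pp^(Suc l) * u$i)} = n"
      define S where "S = {i. i<m \<and> \<not> dvdp (pp^(Suc l) * u$i)}"
      show "\<exists>v. reach m u v \<and> v \<in> carrier_vec m \<and> (\<forall>i<m. pp^l * v$i \<in> Zz) \<and> nrm m v = 1"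
      proof (cases "S = {}")
        case True
        have "pp^l * u$i \<in> Zz" if "i < m" for i
        proof -
          have "dvdp (pp^(Suc l) * u$i)" using True that unfolding S_def by blast
          then obtain w where w: "w \<in> Zz" "pp^(Suc l) * u$i = pp * w" unfolding dvdp_def by blast
          then have "pp * (pp^l * u$i) = pp * w" by (simp add: mult.assoc)
          then have "pp^l * u$i = w" by simp
          then show ?thesis using w by simp
        qed
        then show ?thesis using u un reach_refl by blast
      next
        case False
        then obtain i where i: "i < m" "\<not> dvdp (pp^(Suc l) * u$i)" unfolding S_def by blast
        have nx: "(\<Sum>k<m. (cmod (pp^(Suc l) * u$k))^2) = 2^(Suc l)"
          using un unfolding nrm_def cmod_ppL by (simp flip: sum_distrib_left)
        obtain j e w where j: "j < m" "j \<noteq> i" "w \<in> Zz" "pp^(Suc l) * u$i - zeta12^e * (pp^(Suc l) * u$j) = 2*w"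
          using find_partner[of m "\<lambda>k. pp^(Suc l) * u$k" l i] uZ nx i by blast
        obtain v where v: "reach m u v" "v \<in> carrier_vec m" "nrm m v = nrm m u" "dvdp (pp^(Suc l) * v$i)"
          "dvdp (pp^(Suc l) * v$j)" "\<forall>t<m. t \<noteq> i \<longrightarrow> t \<noteq> j \<longrightarrow> v$t = u$t"
          using pair_op[OF u i(1) j(1) j(2)[symmetric] j(3) j(4)] uZ j(1) by blast
        define S' where "S' = {i. i<m \<and> \<not> dvdp (pp^(Suc l) * v$i)}"
        have "S' \<subseteq> S - {i}" unfolding S'_def S_def using v(4,5,6) by auto
        then have "S' \<subset> S" using i unfolding S_def by blast
        moreover have "finite S" unfolding S_def by simp
        ultimately have "card S' < card S" using psubset_card_mono by blast
        then have lt: "card S' < n" using card unfolding S_def by simp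
        have vZ: "\<forall>t<m. pp^(Suc l) * v$t \<in> Zz"
        proof (intro allI impI)
          fix t assume t: "t < m"
          show "pp^(Suc l) * v$t \<in> Zz"
          proof (cases "t = i \<or> t = j")
            case True then show ?thesis using v(4,5) dvdp_Zz by blast
          next
            case False then show ?thesis using v(6) uZ t by auto
          qed
        qed
        obtain v' where v': "reach m v v'" "v' \<in> carrier_vec m" "\<forall>i<m. pp^l * v'$i \<in> Zz" "nrm m v' = 1"
        proof -
          have "\<exists>v'. reach m v v' \<and> v' \<in> carrier_vec m \<and> (\<forall>i<m. pp^l * v'$i \<in> Zz) \<and> nrm m v' = 1"
            by (rule less.IH[OF lt, rule_format, of v]) (use v(2,3) vZ un in \<open>auto simp: S'_def\<close>)
          then show ?thesis using that by blast
        qed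
        show ?thesis using reach_trans[OF v(1) v'(1) u] v' by blast
      qed
    qed
  qed
  then show ?thesis using assms by blast
qed

lemma sq_small: "(a::int)^2 \<le> 2 \<Longrightarrow> a = -1 \<or> a = 0 \<or> a = 1"
  by (smt (verit) mult_cancel_right1 power2_eq_1_iff power2_eq_square power2_minus power_mono)

lemma sq0: "(a::int)^2 + a*c + c^2 = 0 \<Longrightarrow> a = 0 \<and> c = 0"
  by (smt (verit, ccfv_SIG) power2_sum ring_class.ring_distribs(2) sum_power2_le_zero_iff)

lemma sq_nonneg: "(a::int)^2 + a*c + c^2 \<ge> 0"
proof -
  have "2 * ((a::int)^2 + a*c + c^2) = a^2 + c^2 + (a+c)^2" by (simp add: power2_eq_square algebra_simps)
  moreover have "a^2 + c^2 + (a+c)^2 \<ge> 0" by simp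
  ultimately show ?thesis by (smt (verit))
qed

lemma zeta_more: "zeta12^6 = -1" "zeta12^8 = - (zeta12^2)" "zeta12^10 = - (zeta12^4)"
proof -
  show "zeta12^6 = -1" by (rule zeta6)
  have "zeta12^8 = zeta12^6 * zeta12^2" by (simp flip: power_add)
  then show "zeta12^8 = - (zeta12^2)" by (simp add: zeta6)
  have "zeta12^10 = zeta12^6 * zeta12^4" by (simp flip: power_add)
  then show "zeta12^10 = - (zeta12^4)" by (simp add: zeta6)
qed

lemma unit6: assumes "(a::int)^2 + a*c + c^2 = 1" shows "\<exists>e. of_int a + of_int c * zeta12^2 = zeta12^e"
proof -
  have "2 * ((a::int)^2 + a*c + c^2) = a^2 + c^2 + (a+c)^2" by (simp add: power2_eq_square algebra_simps)
  then have "a^2 \<le> 2" "c^2 \<le> 2" using assms by (smt (verit) zero_le_power2)+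
  then have "a = -1 \<or> a = 0 \<or> a = 1" "c = -1 \<or> c = 0 \<or> c = 1" using sq_small by blast+
  then consider "a = 1" "c = 0" | "a = -1" "c = 0" | "a = 0" "c = 1" | "a = 0" "c = -1" | "a = 1" "c = -1" | "a = -1" "c = 1"
    using assms by auto
  then show ?thesis
  proof cases
    case 1 then show ?thesis by (intro exI[of _ 0]) simp
  next
    case 2 then show ?thesis using zeta6 by (intro exI[of _ 6]) simp
  next
    case 3 then show ?thesis by (intro exI[of _ 2]) simp
  next
    case 4 then show ?thesis using zeta_more by (intro exI[of _ 8]) simp
  next
    case 5 then show ?thesis using zeta_more zeta4 by (intro exI[of _ 10]) simp
  next
    case 6 then show ?thesis using zeta4 by (intro exI[of _ 4]) simp
  qed
qed

lemma unit_q: assumes "a^2+b^2+c^2+d^2+a*c+b*d = 1" shows "\<exists>e. q a b c d = zeta12^e"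
proof -
  have s: "a^2+b^2+c^2+d^2+a*c+b*d = (a^2 + a*c + c^2) + (b^2 + b*d + d^2)" by simp
  have n1: "a^2 + a*c + c^2 \<ge> 0" "b^2 + b*d + d^2 \<ge> 0" by (rule sq_nonneg)+
  consider "a^2 + a*c + c^2 = 0" "b^2 + b*d + d^2 = 1" | "a^2 + a*c + c^2 = 1" "b^2 + b*d + d^2 = 0"
    using assms s n1 by linarith
  then show ?thesis
  proof cases
    case 1
    then have "a = 0" "c = 0" using sq0 by blast+
    obtain e where e: "of_int b + of_int d * zeta12^2 = zeta12^e" using unit6[OF 1(2)] by blast
    have "q a b c d = zeta12 * (of_int b + of_int d * zeta12^2)" unfolding q_def \<open>a = 0\<close> \<open>c = 0\<close>
      by (simp add: algebra_simps power_numeral_reduce)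
    also have "\<dots> = zeta12^(Suc e)" unfolding e by simp
    finally show ?thesis by blast
  next
    case 2
    then have "b = 0" "d = 0" using sq0 by blast+
    obtain e where e: "of_int a + of_int c * zeta12^2 = zeta12^e" using unit6[OF 2(1)] by blast
    have "q a b c d = of_int a + of_int c * zeta12^2" unfolding q_def \<open>b = 0\<close> \<open>d = 0\<close> by simp
    then show ?thesis using e by metis
  qed
qed

lemma zeta_inv: "\<exists>f. zeta12^f * zeta12^e = 1"
proof -
  have "zeta12^(11*e) * zeta12^e = (zeta12^12)^e" by (simp flip: power_add power_mult)
  then show ?thesis using zeta12p by auto
qed

lemma X_swap: assumes "i < m" "j < m" "i \<noteq> j"
  shows "reach m (unit_vec m i) (unit_vec m j)"
proof -
  define a where "a = min i j"
  define b where "b = max i j"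
  have ab: "a < b" "b < m" unfolding a_def b_def using assms by auto
  have g: "two_level m a b Xmat \<in> gates m" unfolding gates_def using ab by blast
  have "two_level m a b Xmat *\<^sub>v unit_vec m i = unit_vec m j"
    unfolding two_level_apply[OF unit_vec_carrier ab] Xmat_idx
    using assms ab unfolding a_def b_def by (intro eq_vecI) (auto simp: unit_vec_def min_def max_def)
  then show ?thesis using reach_gate[OF g] by metis
qed

lemma base:
  assumes u: "u \<in> carrier_vec m" "\<forall>k<m. u$k \<in> Zz" "nrm m u = 1" "j < m"
  shows "reach m u (unit_vec m j)"
proof -
  have "\<forall>k. \<exists>t. k < m \<longrightarrow> u$k = q (fst t) (fst (snd t)) (fst (snd (snd t))) (snd (snd (snd t)))"
    using u(2) unfolding Zz_def by fastforce
  then obtain T where T: "\<And>k. k < m \<Longrightarrow> u$k = q (fst (T k)) (fst (snd (T k))) (fst (snd (snd (T k)))) (snd (snd (snd (T k))))"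
    by metis
  define A where "A k = fst (T k)" for k
  define B where "B k = fst (snd (T k))" for k
  define C where "C k = fst (snd (snd (T k)))" for k
  define D where "D k = snd (snd (snd (T k)))" for k
  have xk: "\<And>k. k < m \<Longrightarrow> u$k = q (A k) (B k) (C k) (D k)" using T unfolding A_def B_def C_def D_def by blast
  define P where "P k = (A k)^2 + (B k)^2 + (C k)^2 + (D k)^2 + A k * C k + B k * D k" for k
  define Q where "Q k = A k * B k + B k * C k + C k * D k" for k
  have nk: "(cmod (u$k))^2 = real_of_int (P k) + real_of_int (Q k) * sqrt 3" if "k < m" for k
    unfolding xk[OF that] norm_q P_def Q_def by simp
  have nk': "(cmod (q (A k) (- B k) (C k) (- D k)))^2 = real_of_int (P k) - real_of_int (Q k) * sqrt 3" for k
    unfolding norm_q_conj P_def Q_def by simp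
  have Pnn: "P k \<ge> 0" if "k < m" for k
  proof -
    have "0 \<le> (cmod (u$k))^2 + (cmod (q (A k) (- B k) (C k) (- D k)))^2" by simp
    then have "real_of_int (P k) \<ge> 0" unfolding nk[OF that] nk' by simp
    then show ?thesis by simp
  qed
  have Pz: "u$k = 0" if "k < m" "P k = 0" for k
  proof -
    have "0 \<le> (cmod (u$k))^2" "0 \<le> (cmod (q (A k) (- B k) (C k) (- D k)))^2" by simp_all
    then have "real_of_int (Q k) * sqrt 3 = 0" unfolding nk[OF that(1)] nk' that(2) by simp
    then have "(cmod (u$k))^2 = 0" unfolding nk[OF that(1)] that(2) by simp
    then show ?thesis by simp
  qed
  have "(\<Sum>k<m. (cmod (u$k))^2) = (\<Sum>k<m. real_of_int (P k) + real_of_int (Q k) * sqrt 3)"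
    using nk by (intro sum.cong) auto
  also have "\<dots> = real_of_int (\<Sum>k<m. P k) + real_of_int (\<Sum>k<m. Q k) * sqrt 3"
    by (simp add: sum.distrib sum_distrib_right)
  finally have e: "real_of_int (\<Sum>k<m. P k) + real_of_int (\<Sum>k<m. Q k) * sqrt 3 = real_of_int 1"
    using u(3) unfolding nrm_def by simp
  have Q0: "(\<Sum>k<m. Q k) = 0" using sqrt3_lin[OF e] .
  have "real_of_int (\<Sum>k<m. P k) = real_of_int 1" using e unfolding Q0
    by (simp only: of_int_0 mult_zero_left add_0_right)
  then have P1: "(\<Sum>k<m. P k) = 1" by (simp only: of_int_eq_iff)
  obtain i0 where i0: "i0 < m" "P i0 \<ge> 1"
  proof (rule ccontr)
    assume "\<not> thesis"
    then have "\<forall>k<m. P k \<le> 0" using that by force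
    then have "(\<Sum>k<m. P k) \<le> 0" by (intro sum_nonpos) auto
    then show False using P1 by simp
  qed
  have split: "(\<Sum>k<m. P k) = P i0 + (\<Sum>k\<in>{..<m} - {i0}. P k)" using i0 by (simp add: sum.remove)
  have rnn: "(\<Sum>k\<in>{..<m} - {i0}. P k) \<ge> 0" using Pnn by (intro sum_nonneg) auto
  have Pi0: "P i0 = 1" and r0: "(\<Sum>k\<in>{..<m} - {i0}. P k) = 0" using split rnn i0 P1 by linarith+
  have oth: "u$k = 0" if "k < m" "k \<noteq> i0" for k
  proof -
    have "P k = 0" using r0 sum_nonneg_eq_0_iff[of "{..<m} - {i0}" P] Pnn that by auto
    then show ?thesis using Pz that by blast
  qed
  obtain e where ue: "u$i0 = zeta12^e" using unit_q[of "A i0" "B i0" "C i0" "D i0"] Pi0 xk[OF i0(1)] unfolding P_def by auto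
  obtain f where f: "zeta12^f * zeta12^e = 1" using zeta_inv by blast
  have "mulj m u i0 (zeta12^f) = unit_vec m i0" unfolding mulj_def unit_vec_def
    using ue oth f by (intro eq_vecI) auto
  then have r1: "reach m u (unit_vec m i0)" using mulj_reach[OF u(1) i0(1), of f] by simp
  show ?thesis
  proof (cases "i0 = j")
    case True then show ?thesis using r1 by simp
  next
    case False then show ?thesis using reach_trans[OF r1 X_swap[OF i0(1) u(4) False] u(1)] by simp
  qed
qed

lemma all_levels: "\<forall>u. u \<in> carrier_vec m \<longrightarrow> (\<forall>i<m. pp^l * u$i \<in> Zz) \<longrightarrow> nrm m u = 1 \<longrightarrow> j < m \<longrightarrow> reach m u (unit_vec m j)"
proof (induction l)
  case 0 then show ?case using base by simp
next
  case (Suc l)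
  show ?case
  proof (intro allI impI)
    fix u assume u: "u \<in> carrier_vec m" "\<forall>i<m. pp^(Suc l) * u$i \<in> Zz" "nrm m u = 1" "j < m"
    obtain v where v: "reach m u v" "v \<in> carrier_vec m" "\<forall>i<m. pp^l * v$i \<in> Zz" "nrm m v = 1"
      using level_step[OF u(1-3)] by blast
    have "reach m v (unit_vec m j)" using Suc v u(4) by blast
    then show "reach m u (unit_vec m j)" using reach_trans[OF v(1) _ u(1)] by blast
  qed
qed

theorem lemma7p5:
  fixes m j :: nat and u :: "complex vec"
  assumes "u \<in> carrier_vec m"
    and "\<forall>i<m. u $ i \<in> R12"
    and "(\<Sum>i<m. (cmod (u $ i))\<^sup>2) = 1"
    and "j < m"
  shows "\<exists>Gs. set Gs \<subseteq> gates m \<and> mat_prod_list m Gs *\<^sub>v u = unit_vec m j"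
proof -
  have "\<forall>i. \<exists>k. i < m \<longrightarrow> (2::complex)^k * u$i \<in> Zz" using assms(2) R12_den by blast
  then obtain f where f: "\<And>i. i < m \<Longrightarrow> (2::complex)^(f i) * u$i \<in> Zz" by metis
  define K where "K = (\<Sum>i<m. f i)"
  have "f i \<le> K" if "i < m" for i unfolding K_def using that by (intro member_le_sum) auto
  then have "(2::complex)^K * u$i \<in> Zz" if "i < m" for i using den_mono f that by blast
  then have "\<forall>i<m. pp^(2*K) * u$i \<in> Zz" using den_pp by blast
  moreover have "nrm m u = 1" unfolding nrm_def using assms(3) by simp
  ultimately have "reach m u (unit_vec m j)" using all_levels assms(1,4) by blast
  then show ?thesis unfolding reach_def .
qed

end
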